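(* Consider the learning-to-search procedure described in the context with roll-out policy equal to the reference policy ($\pi^{\mathrm{out}}=\pi^{\mathrm{ref}}$). Then there is a distribution $\mathcal D$ over $(x,y)$ (together with a search space, features, policy class and reference policy) such that the induced online cost-sensitive regret satisfies $\mathrm{Regret}^{\mathrm{CS}}_M=o(M)$, but the averaged learned policy $\bar\pi$ has arbitrarily large structured regret to one-step deviations, i.e. $J(\bar\pi)-J(\pi')$ can be arbitrarily large for some one-step deviation $\pi'$ of $\bar\pi$.
   Context: Structured prediction / learning-to-search setting: a distribution $\mathcal D$ over $(x,y)$; each $x$ induces a search space with start state $b$, deterministic transitions on (state, action) pairs, trajectories of exactly $T$ actions ending in end states $e$ with nonnegative losses $\ell(e)$. Policies choose actions as a function of state features $\Phi(s)$ and belong to a class $\Pi$; a reference policy $\pi^{\mathrm{ref}}$ is given (not assumed optimal). $J(\pi)$ is the expected loss of the end state reached by following $\pi$. A one-step deviation of a policy $\pi$ is a policy obtained from $\pi$ by changing a single one of its decisions; a policy is locally optimal if no one-step deviation has smaller $J$. Generic procedure with roll-in policy $\pi^{\mathrm{in}}$ (the current learned policy) and roll-out policy $\pi^{\mathrm{out}}$: for each example and each $t\in\{0,\dots,T-1\}$, execute $\pi^{\mathrm{in}}$ for $t$ steps to reach $s_t$; for each $a\in A(s_t)$ take $a$ and complete the trajectory with $\pi^{\mathrm{out}}$, reaching $e(a)$; form the cost-sensitive example with features $\Phi(s_t)$ and costs $c(a)=\ell(e(a))-\min_{a'}\ell(e(a'))$. These are given to an online cost-sensitive learner producing learned policies;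 the averaged policy $\bar\pi$ picks one uniformly at random. $\mathrm{Regret}^{\mathrm{CS}}_M$ is the learner's cumulative cost on the $M$ generated examples minus that of the best fixed policy in $\Pi$. *)

theory Defs
  imports "HOL-Probability.Probability_Mass_Function" "HOL-Library.Landau_Symbols"
begin

text \<open>Examples e stand for pairs (x,y), drawn from the pmf
  l2s_D. Each example induces a search space: start state, available actions,
  deterministic transitions, horizon T, losses of end states, state features, the
  policy class (policies are functions of the features) and the reference policy
  (which may depend on the whole example, including y).\<close>

record ('e, 's, 'a, 'f) l2s =
  l2s_D     :: "'e pmf"
  l2s_start :: "'e \<Rightarrow> 's"
  l2s_acts  :: "'e \<Rightarrow> 's \<Rightarrow> 'a set"
  l2s_trans :: "'e \<Rightarrow> 's \<Rightarrow> 'a \<Rightarrow> 's"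
  l2s_T     :: nat
  l2s_loss  :: "'e \<Rightarrow> 's \<Rightarrow> real"
  l2s_feat  :: "'e \<Rightarrow> 's \<Rightarrow> 'f"
  l2s_Pi    :: "('f \<Rightarrow> 'a) set"
  l2s_ref   :: "'e \<Rightarrow> 's \<Rightarrow> 'a"

definition wf_l2s :: "('e, 's, 'a, 'f) l2s \<Rightarrow> bool" where
  "wf_l2s I \<longleftrightarrow>
     finite (set_pmf (l2s_D I)) \<and>
     (\<forall>e s. finite (l2s_acts I e s) \<and> l2s_acts I e s \<noteq> {}) \<and>
     (\<forall>e s. l2s_ref I e s \<in> l2s_acts I e s) \<and>
     l2s_Pi I \<noteq> {} \<and>
     (\<forall>\<pi>\<in>l2s_Pi I. \<forall>e s. \<pi> (l2s_feat I e s) \<in> l2s_acts I e s) \<and>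
     (\<forall>e s. 0 \<le> l2s_loss I e s)"

fun steps :: "('s \<Rightarrow> 'a \<Rightarrow> 's) \<Rightarrow> ('s \<Rightarrow> 'a) \<Rightarrow> nat \<Rightarrow> 's \<Rightarrow> 's" where
  "steps tr p 0 s = s"
| "steps tr p (Suc n) s = steps tr p n (tr s (p s))"

definition act :: "('e, 's, 'a, 'f) l2s \<Rightarrow> 'e \<Rightarrow> ('f \<Rightarrow> 'a) \<Rightarrow> 's \<Rightarrow> 'a" where
  "act I e \<pi> s = \<pi> (l2s_feat I e s)"

definition end_state :: "('e, 's, 'a, 'f) l2s \<Rightarrow> 'e \<Rightarrow> ('f \<Rightarrow> 'a) \<Rightarrow> 's" where
  "end_state I e \<pi> = steps (l2s_trans I e) (act I e \<pi>) (l2s_T I) (l2s_start I e)"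

definition J :: "('e, 's, 'a, 'f) l2s \<Rightarrow> ('f \<Rightarrow> 'a) \<Rightarrow> real" where
  "J I \<pi> = measure_pmf.expectation (l2s_D I) (\<lambda>e. l2s_loss I e (end_state I e \<pi>))"

definition dev_end_state ::
  "('e, 's, 'a, 'f) l2s \<Rightarrow> 'e \<Rightarrow> ('f \<Rightarrow> 'a) \<Rightarrow> nat \<Rightarrow> ('f \<Rightarrow> 'a) \<Rightarrow> 's" where
  "dev_end_state I e \<pi> t h =
     (let st = steps (l2s_trans I e) (act I e \<pi>) t (l2s_start I e)
      in steps (l2s_trans I e) (act I e \<pi>) (l2s_T I - Suc t)
               (l2s_trans I e st (act I e h st)))"

definition J_dev :: "('e, 's, 'a, 'f) l2s \<Rightarrow> ('f \<Rightarrow> 'a) \<Rightarrow> nat \<Rightarrow> ('f \<Rightarrow> 'a) \<Rightarrow> real" where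
  "J_dev I \<pi> t h = measure_pmf.expectation (l2s_D I) (\<lambda>e. l2s_loss I e (dev_end_state I e \<pi> t h))"

text \<open>Averaged policy over the first N learned policies (pick one uniformly at random,
  then follow it), and its one-step deviation.\<close>
definition J_avg :: "('e, 's, 'a, 'f) l2s \<Rightarrow> (nat \<Rightarrow> 'f \<Rightarrow> 'a) \<Rightarrow> nat \<Rightarrow> real" where
  "J_avg I pols N = (\<Sum>i<N. J I (pols i)) / real N"

definition J_avg_dev ::
  "('e, 's, 'a, 'f) l2s \<Rightarrow> (nat \<Rightarrow> 'f \<Rightarrow> 'a) \<Rightarrow> nat \<Rightarrow> nat \<Rightarrow> ('f \<Rightarrow> 'a) \<Rightarrow> real" where
  "J_avg_dev I pols N t h = (\<Sum>i<N. J_dev I (pols i) t h) / real N"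

definition cs_example ::
  "('e, 's, 'a, 'f) l2s \<Rightarrow> 'e \<Rightarrow> ('f \<Rightarrow> 'a) \<Rightarrow> nat \<Rightarrow> 'f \<times> ('a \<Rightarrow> real)" where
  "cs_example I e \<pi> t =
     (let st = steps (l2s_trans I e) (act I e \<pi>) t (l2s_start I e);
          L = (\<lambda>a. l2s_loss I e (steps (l2s_trans I e) (l2s_ref I e) (l2s_T I - Suc t)
                                    (l2s_trans I e st a)))
      in (l2s_feat I e st, \<lambda>a. L a - Min (L ` l2s_acts I e st)))"

text \<open>The policy used for roll-in on the n-th structured example is the learner's
  output on all cost-sensitive examples generated from examples 0..n-1.\<close>
type_synonym ('f, 'a) learner = "('f \<times> ('a \<Rightarrow> real)) list \<Rightarrow> ('f \<Rightarrow> 'a)"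

fun history ::
  "('e, 's, 'a, 'f) l2s \<Rightarrow> ('f, 'a) learner \<Rightarrow> (nat \<Rightarrow> 'e) \<Rightarrow> nat \<Rightarrow> ('f \<times> ('a \<Rightarrow> real)) list" where
  "history I L xs 0 = []"
| "history I L xs (Suc n) = history I L xs n @
     map (cs_example I (xs n) (L (history I L xs n))) [0..<l2s_T I]"

definition learned :: "('e, 's, 'a, 'f) l2s \<Rightarrow> ('f, 'a) learner \<Rightarrow> (nat \<Rightarrow> 'e) \<Rightarrow> nat \<Rightarrow> ('f \<Rightarrow> 'a)" where
  "learned I L xs n = L (history I L xs n)"

text \<open>Cumulative cost of a fixed policy p on the M = N * T cost-sensitive examples
  generated from the first N structured examples.\<close>
definition cs_cost ::
  "('e, 's, 'a, 'f) l2s \<Rightarrow> ('f, 'a) learner \<Rightarrow> (nat \<Rightarrow> 'e) \<Rightarrow> nat \<Rightarrow> ('f \<Rightarrow> 'a) \<Rightarrow> real" where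
  "cs_cost I L xs N p =
     (\<Sum>n<N. \<Sum>t<l2s_T I.
        (let ex = cs_example I (xs n) (learned I L xs n) t in snd ex (p (fst ex))))"

definition cs_learner_cost ::
  "('e, 's, 'a, 'f) l2s \<Rightarrow> ('f, 'a) learner \<Rightarrow> (nat \<Rightarrow> 'e) \<Rightarrow> nat \<Rightarrow> real" where
  "cs_learner_cost I L xs N =
     (\<Sum>n<N. \<Sum>t<l2s_T I.
        (let ex = cs_example I (xs n) (learned I L xs n) t
         in snd ex (learned I L xs n (fst ex))))"

definition regret_CS ::
  "('e, 's, 'a, 'f) l2s \<Rightarrow> ('f, 'a) learner \<Rightarrow> (nat \<Rightarrow> 'e) \<Rightarrow> nat \<Rightarrow> real" where
  "regret_CS I L xs N = cs_learner_cost I L xs N - (INF p\<in>l2s_Pi I. cs_cost I L xs N p)"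

end

theory Submission
  imports Defs
begin

definition lossB :: "real \<Rightarrow> nat \<Rightarrow> nat \<Rightarrow> real" where
  "lossB B e s = (if s = 5 then 0 else max B 0)"

definition instB :: "real \<Rightarrow> (nat, nat, nat, nat) l2s" where
  "instB B = \<lparr> l2s_D = return_pmf 0, l2s_start = (\<lambda>e. 0), l2s_acts = (\<lambda>e s. {0,1}),
     l2s_trans = (\<lambda>e s a. 2 * s + 1 + a), l2s_T = 2, l2s_loss = lossB B,
     l2s_feat = (\<lambda>e s. s), l2s_Pi = {(\<lambda>f. 0), (\<lambda>f. 1)}, l2s_ref = (\<lambda>e s. 1) \<rparr>"

lemma cs0: "cs_example (instB B) e (\<lambda>f. 0) 0 = (0, \<lambda>a. lossB B e (2 * (1 + a) + 2) - Min {lossB B e 4, lossB B e 6})"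
  by (simp add: cs_example_def instB_def act_def image_insert eval_nat_numeral)

lemma cs1: "cs_example (instB B) e (\<lambda>f. 0) (Suc 0) = (1, \<lambda>a. lossB B e (3+a) - Min {lossB B e 3, lossB B e 4})"
  by (simp add: cs_example_def instB_def act_def image_insert eval_nat_numeral)

lemma T2: "{..<l2s_T (instB B)} = {0,1}" by (auto simp: instB_def)

lemma learned0: "learned (instB B) (\<lambda>h. \<lambda>f. 0) xs n = (\<lambda>f. 0)"
  by (simp add: learned_def)

lemma costs_nonneg: "snd (cs_example (instB B) e (\<lambda>f. 0) t) a \<ge> 0" if "t \<in> {0,1}" "a \<in> {0,1}"
  using that by (auto simp: cs0 cs1 lossB_def)

lemma learner_cost0: "cs_learner_cost (instB B) (\<lambda>h. \<lambda>f. 0) xs N = 0"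
  unfolding cs_learner_cost_def learned0 T2
  by (simp add: cs0 cs1 lossB_def)

lemma cost_p0: "cs_cost (instB B) (\<lambda>h. \<lambda>f. 0) xs N (\<lambda>f. 0) = 0"
  unfolding cs_cost_def learned0 T2
  by (simp add: cs0 cs1 lossB_def)

lemma cost_p1: "cs_cost (instB B) (\<lambda>h. \<lambda>f. 0) xs N (\<lambda>f. 1) \<ge> 0"
  unfolding cs_cost_def learned0 T2
  by (intro sum_nonneg) (auto intro: costs_nonneg simp: Let_def)

lemma regret0: "regret_CS (instB B) (\<lambda>h. \<lambda>f. 0) xs N = 0"
proof -
  have "l2s_Pi (instB B) = {(\<lambda>f. 0), (\<lambda>f. 1)}" by (simp add: instB_def)
  then have "(INF p\<in>l2s_Pi (instB B). cs_cost (instB B) (\<lambda>h. \<lambda>f. 0) xs N p) = 0"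
    using cost_p0[of B xs N] cost_p1[of B xs N] by (auto intro!: cInf_eq_minimum)
  then show ?thesis by (simp add: regret_CS_def learner_cost0)
qed

lemma Jp0: "J (instB B) (\<lambda>f. 0) = max B 0"
  by (simp add: J_def end_state_def instB_def act_def lossB_def numeral_2_eq_2)

lemma Jdev: "J_dev (instB B) (\<lambda>f. 0) 0 (\<lambda>f. Suc 0) = 0"
  by (simp add: J_dev_def dev_end_state_def instB_def act_def lossB_def eval_nat_numeral)

theorem theorem2:
  shows "\<forall>B::real. \<exists>(I :: (nat, nat, nat, nat) l2s) (L :: (nat, nat) learner).
     wf_l2s I \<and>
     (\<forall>h. L h \<in> l2s_Pi I) \<and>
     (\<forall>xs. (\<forall>n. xs n \<in> set_pmf (l2s_D I)) \<longrightarrow>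
        (\<lambda>N. regret_CS I L xs N) \<in> o(\<lambda>N. real (N * l2s_T I)) \<and>
        (\<forall>N\<ge>1. \<exists>t<l2s_T I. \<exists>h\<in>l2s_Pi I.
            J_avg I (learned I L xs) N - J_avg_dev I (learned I L xs) N t h \<ge> B))"
proof
  fix B :: real
  show "\<exists>(I :: (nat, nat, nat, nat) l2s) (L :: (nat, nat) learner).
     wf_l2s I \<and>
     (\<forall>h. L h \<in> l2s_Pi I) \<and>
     (\<forall>xs. (\<forall>n. xs n \<in> set_pmf (l2s_D I)) \<longrightarrow>
        (\<lambda>N. regret_CS I L xs N) \<in> o(\<lambda>N. real (N * l2s_T I)) \<and>
        (\<forall>N\<ge>1. \<exists>t<l2s_T I. \<exists>h\<in>l2s_Pi I.
            J_avg I (learned I L xs) N - J_avg_dev I (learned I L xs) N t h \<ge> B))"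
  proof (intro exI[of _ "instB B"] exI[of _ "\<lambda>h. \<lambda>f. 0"] conjI allI impI)
    show "wf_l2s (instB B)" by (auto simp: wf_l2s_def instB_def lossB_def)
    show "\<And>h. (\<lambda>f. 0) \<in> l2s_Pi (instB B)" by (simp add: instB_def)
    fix xs :: "nat \<Rightarrow> nat"
    show "(\<lambda>N. regret_CS (instB B) (\<lambda>h. \<lambda>f. 0) xs N) \<in> o(\<lambda>N. real (N * l2s_T (instB B)))"
      by (simp add: regret0)
    fix N :: nat assume "N \<ge> 1"
    show "\<exists>t<l2s_T (instB B). \<exists>h\<in>l2s_Pi (instB B).
            J_avg (instB B) (learned (instB B) (\<lambda>h. \<lambda>f. 0) xs) N
          - J_avg_dev (instB B) (learned (instB B) (\<lambda>h. \<lambda>f. 0) xs) N t h \<ge> B"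
    proof -
      from \<open>N \<ge> 1\<close> have "J_avg (instB B) (learned (instB B) (\<lambda>h. \<lambda>f. 0) xs) N
          - J_avg_dev (instB B) (learned (instB B) (\<lambda>h. \<lambda>f. 0) xs) N 0 (\<lambda>f. 1) = max B 0"
        by (simp add: J_avg_def J_avg_dev_def learned0 Jp0 Jdev)
      moreover have "0 < l2s_T (instB B)" "(\<lambda>f. 1) \<in> l2s_Pi (instB B)" by (auto simp: instB_def)
      ultimately show ?thesis
        by (metis max.cobounded1)
    qed
  qed
qed

end
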